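(* Let $g\colon\mathbb{R}^d\to\mathbb{R}\cup\{+\infty\}$ be closed and $\alpha$-strongly convex with minimizer $x^\star$. For each $x\in\mathbb{R}^d$ let $g_x\colon\mathbb{R}^d\to\mathbb{R}\cup\{+\infty\}$ be closed convex with $|g_x(y)-g(y)|\le\frac q2\|y-x\|^2$ for all $y$. Let $\theta>q$, $x_0\in\mathbb{R}^d$ and $x_{k+1}=\operatorname{argmin}_{x}\{g_{x_k}(x)+\frac\theta2\|x-x_k\|^2\}$. Then for all $k\ge0$, $$\|x_{k+1}-x^\star\|\le\Big(\frac{\theta+q}{\alpha+\theta}\Big)^{\frac{k+1}{2}}\|x_0-x^\star\|.$$ *)

theory Defs
  imports "HOL-Analysis.Analysis"
begin

text \<open>Extended-valued functions f :: 'a \<Rightarrow> ereal, meant to take values in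
  the reals or +infinity.\<close>

definition ext_closed :: "('a::real_normed_vector \<Rightarrow> ereal) \<Rightarrow> bool" where
  "ext_closed f \<longleftrightarrow> closed {(x, t::real). f x \<le> ereal t}"

definition ext_strongly_convex :: "real \<Rightarrow> ('a::real_normed_vector \<Rightarrow> ereal) \<Rightarrow> bool" where
  "ext_strongly_convex \<alpha> f \<longleftrightarrow>
     (\<forall>x y t. 0 \<le> t \<and> t \<le> 1 \<longrightarrow>
        f ((1 - t) *\<^sub>R x + t *\<^sub>R y)
          \<le> ereal (1 - t) * f x + ereal t * f y - ereal (\<alpha> / 2 * t * (1 - t) * (norm (x - y))\<^sup>2))"

definition ext_convex :: "('a::real_normed_vector \<Rightarrow> ereal) \<Rightarrow> bool" where
  "ext_convex f \<longleftrightarrow> ext_strongly_convex 0 f"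

end

theory Submission
  imports Defs
begin

lemma normid:
  fixes p s z :: "'a::real_inner"
  shows "(norm ((1-t) *\<^sub>R p + t *\<^sub>R s - z))^2 = (1-t)*(norm(p-z))^2 + t*(norm(s-z))^2 - t*(1-t)*(norm(p-s))^2"
proof -
  have e: "(1-t) *\<^sub>R p + t *\<^sub>R s - z = (1-t) *\<^sub>R (p-z) + t *\<^sub>R (s-z)" by (simp add: algebra_simps)
  have e2: "p - s = (p-z) - (s-z)" by simp
  show ?thesis unfolding e e2 by (simp add: power2_norm_eq_inner inner_simps algebra_simps)
qed

lemma keyreal:
  fixes a b K :: real
  assumes h: "\<And>t. 0<t \<Longrightarrow> t<1 \<Longrightarrow> a \<le> (1-t)*a + t*b - K*t*(1-t)"
  shows "a + K \<le> b"
proof -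
  have h2: "a + K - b \<le> K*t" if "0<t" "t<1" for t
  proof -
    have "t*(a + K - b - K*t) \<le> 0" using h[OF that] by (simp add: algebra_simps)
    hence "a + K - b - K*t \<le> 0" using that by (simp add: mult_le_0_iff)
    thus ?thesis by simp
  qed
  show ?thesis
  proof (cases "K \<le> 0")
    case True thus ?thesis using h2[of "1/2"] by simp
  next
    case False
    show ?thesis
    proof (rule ccontr)
      assume nt: "\<not> a + K \<le> b"
      define c where "c = a + K - b"
      have c: "c > 0" using nt c_def by simp
      define t where "t = min (1/2) (c/(2*K))"
      have t: "0 < t" "t < 1" using c False by (auto simp: t_def)
      have "K*t \<le> K*(c/(2*K))" using False by (intro mult_left_mono) (auto simp: t_def)
      also have "\<dots> = c/2" using False by simp
      finally show False using h2[OF t] c c_def by simp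
    qed
  qed
qed

lemma lin1: fixes A B C D P S E \<alpha> \<theta> q :: real
  assumes opt1: "(A + \<theta>/2 * P) + \<theta>/2 * E \<le> B + \<theta>/2 * S"
  and opt2: "C + \<alpha>/2 * E \<le> D"
  and Dle: "D \<le> A + q/2 * P" and Ble: "B \<le> C + q/2 * S" and tq: "(\<theta> - q) * P \<ge> 0"
  shows "(\<alpha> + \<theta>) * E \<le> (\<theta> + q) * S"
  using opt1 opt2 Dle Ble tq by (simp add: algebra_simps)

lemma lin2: fixes E S ab tq :: real assumes "ab > 0" "ab * E \<le> tq * S" shows "E \<le> tq / ab * S"
  using assms by (simp add: field_simps)

theorem mainTheorem10:
  fixes g :: "real ^ 'd \<Rightarrow> ereal"
    and gx :: "real ^ 'd \<Rightarrow> real ^ 'd \<Rightarrow> ereal"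
    and \<alpha> q \<theta> :: real
    and xstar :: "real ^ 'd"
    and x :: "nat \<Rightarrow> real ^ 'd"
  assumes g_not_minf: "\<And>y. g y \<noteq> -\<infinity>"
    and g_closed: "ext_closed g"
    and alpha_pos: "\<alpha> > 0"
    and g_sc: "ext_strongly_convex \<alpha> g"
    and xstar_min: "\<And>y. g xstar \<le> g y"
    and g_proper: "g xstar < \<infinity>"
    and gx_not_minf: "\<And>z y. gx z y \<noteq> -\<infinity>"
    and gx_closed: "\<And>z. ext_closed (gx z)"
    and gx_convex: "\<And>z. ext_convex (gx z)"
    and gx_upper: "\<And>z y. gx z y \<le> g y + ereal (q / 2 * (norm (y - z))\<^sup>2)"
    and gx_lower: "\<And>z y. g y \<le> gx z y + ereal (q / 2 * (norm (y - z))\<^sup>2)"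
    and theta_gt: "\<theta> > q"
    and step: "\<And>k y. gx (x k) (x (Suc k)) + ereal (\<theta> / 2 * (norm (x (Suc k) - x k))\<^sup>2)
                       \<le> gx (x k) y + ereal (\<theta> / 2 * (norm (y - x k))\<^sup>2)"
  shows "\<forall>k. norm (x (Suc k) - xstar)
           \<le> ((\<theta> + q) / (\<alpha> + \<theta>)) powr ((real k + 1) / 2) * norm (x 0 - xstar)"
  proof -
  have sxs: "xstar \<in> UNIV" by simp
  obtain C where C: "g xstar = ereal C" using g_proper g_not_minf[of xstar]
    by (cases "g xstar") auto
  have q0: "q \<ge> 0"
  proof -
    obtain b :: "real^'d" where b: "b \<in> Basis" using nonempty_Basis by blast
    let ?z = "xstar + b"
    have n: "norm (xstar - ?z) = 1" using b by simp
    have u: "gx ?z xstar \<le> ereal (C + q/2)" using gx_upper[of ?z xstar] n C by simp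
    have l: "ereal C \<le> gx ?z xstar + ereal (q/2)" using gx_lower[of xstar ?z] n C by simp
    have "ereal C \<le> ereal (C + q/2) + ereal (q/2)"
      using l u by (meson add_right_mono order_trans)
    thus ?thesis by simp
  qed
  have ab: "\<alpha> + \<theta> > 0" using q0 theta_gt alpha_pos by linarith
  define r where "r = (\<theta> + q) / (\<alpha> + \<theta>)"
  have r0: "r > 0" using q0 theta_gt ab by (simp add: r_def)
  have onestep: "norm (x (Suc k) - xstar) \<le> sqrt r * norm (x k - xstar)" for k
  proof -
    define z where "z = x k"
    define p where "p = x (Suc k)"
    define s where "s = xstar"
    have stp: "\<And>y. gx z p + ereal (\<theta>/2 * (norm (p - z))\<^sup>2) \<le> gx z y + ereal (\<theta>/2 * (norm (y - z))\<^sup>2)"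
      using step[of k] unfolding z_def p_def .
    have Bfin: "gx z s \<le> ereal (C + q/2 * (norm (s - z))\<^sup>2)"
      using gx_upper[of z s] C by (simp add: s_def)
    obtain B where B: "gx z s = ereal B" using Bfin gx_not_minf[of z s] by (cases "gx z s") auto
    have "gx z p + ereal (\<theta>/2 * (norm (p - z))\<^sup>2) \<le> ereal (B + \<theta>/2 * (norm (s - z))\<^sup>2)"
      using stp[of s] B by simp
    then obtain A where A: "gx z p = ereal A" using gx_not_minf[of z p] by (cases "gx z p") auto
    have Dfin: "g p \<le> ereal (A + q/2 * (norm (p - z))\<^sup>2)" using gx_lower[of p z] A by simp
    obtain D where D: "g p = ereal D" using Dfin g_not_minf[of p] by (cases "g p") auto
    have Dle: "D \<le> A + q/2 * (norm (p - z))\<^sup>2" using Dfin D by simp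
    have Ble: "B \<le> C + q/2 * (norm (s - z))\<^sup>2" using Bfin B by simp
    have opt1: "(A + \<theta>/2 * (norm (p - z))\<^sup>2) + \<theta>/2 * (norm (p - s))\<^sup>2 \<le> B + \<theta>/2 * (norm (s - z))\<^sup>2"
    proof (rule keyreal)
      fix t :: real assume t: "0 < t" "t < 1"
      define w where "w = (1-t) *\<^sub>R p + t *\<^sub>R s"
      have cv: "gx z w \<le> ereal (1 - t) * gx z p + ereal t * gx z s - ereal (0 / 2 * t * (1 - t) * (norm (p - s))\<^sup>2)"
        using gx_convex[of z, unfolded ext_convex_def ext_strongly_convex_def, rule_format, of t p s] t unfolding w_def by simp
      hence cv': "gx z w \<le> ereal ((1-t)*A + t*B)" using A B by simp
      have "ereal (A + \<theta>/2 * (norm (p - z))\<^sup>2) \<le> gx z w + ereal (\<theta>/2 * (norm (w - z))\<^sup>2)"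
        using stp[of w] A by simp
      also have "\<dots> \<le> ereal ((1-t)*A + t*B) + ereal (\<theta>/2 * (norm (w - z))\<^sup>2)"
        using cv' by (rule add_right_mono)
      finally have "A + \<theta>/2 * (norm (p - z))\<^sup>2 \<le> (1-t)*A + t*B + \<theta>/2 * (norm (w - z))\<^sup>2" by simp
      also have "(norm (w - z))\<^sup>2 = (1-t)*(norm(p-z))^2 + t*(norm(s-z))^2 - t*(1-t)*(norm(p-s))^2"
        unfolding w_def by (rule normid)
      finally have fin: "A + \<theta>/2 * (norm (p - z))\<^sup>2 \<le> (1-t)*A + t*B + \<theta>/2 * ((1-t)*(norm(p-z))^2 + t*(norm(s-z))^2 - t*(1-t)*(norm(p-s))^2)" .
      have eq: "(1-t)*(A + \<theta>/2 * (norm (p - z))\<^sup>2) + t*(B + \<theta>/2 * (norm (s - z))\<^sup>2) - \<theta>/2 * (norm (p - s))\<^sup>2 * t * (1-t) = (1-t)*A + t*B + \<theta>/2 * ((1-t)*(norm(p-z))^2 + t*(norm(s-z))^2 - t*(1-t)*(norm(p-s))^2)"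
        by (simp add: field_simps)
      show "A + \<theta>/2 * (norm (p - z))\<^sup>2 \<le> (1-t)*(A + \<theta>/2 * (norm (p - z))\<^sup>2) + t*(B + \<theta>/2 * (norm (s - z))\<^sup>2) - \<theta>/2 * (norm (p - s))\<^sup>2 * t * (1-t)"
        using fin eq by linarith
    qed
    have opt2: "C + \<alpha>/2 * (norm (s - p))\<^sup>2 \<le> D"
    proof (rule keyreal)
      fix t :: real assume t: "0 < t" "t < 1"
      define w where "w = (1-t) *\<^sub>R s + t *\<^sub>R p"
      have cv: "g w \<le> ereal (1 - t) * g s + ereal t * g p - ereal (\<alpha> / 2 * t * (1 - t) * (norm (s - p))\<^sup>2)"
        using g_sc[unfolded ext_strongly_convex_def, rule_format, of t s p] t unfolding w_def by simp
      hence "g w \<le> ereal ((1-t)*C + t*D - \<alpha> / 2 * t * (1 - t) * (norm (s - p))\<^sup>2)"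
        using C D by (simp add: s_def)
      moreover have "ereal C \<le> g w" using xstar_min[of w] C by simp
      ultimately have "ereal C \<le> ereal ((1-t)*C + t*D - \<alpha> / 2 * t * (1 - t) * (norm (s - p))\<^sup>2)"
        by (rule order_trans[rotated])
      thus "C \<le> (1-t)*C + t*D - \<alpha> / 2 * (norm (s - p))\<^sup>2 * t * (1 - t)"
        by (simp add: algebra_simps)
    qed
    have nsp: "norm (s - p) = norm (p - s)" by (simp add: norm_minus_commute)
    have tq: "(\<theta> - q) * (norm (p - z))\<^sup>2 \<ge> 0" using theta_gt by simp
    have main: "(\<alpha> + \<theta>) * (norm (p - s))\<^sup>2 \<le> (\<theta> + q) * (norm (s - z))\<^sup>2"
      by (rule lin1[OF opt1 opt2[unfolded nsp] Dle Ble tq])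
    have "(norm (p - s))\<^sup>2 \<le> r * (norm (s - z))\<^sup>2"
      unfolding r_def by (rule lin2[OF ab main])
    hence "sqrt ((norm (p - s))\<^sup>2) \<le> sqrt (r * (norm (s - z))\<^sup>2)" by (rule real_sqrt_le_mono)
    hence "norm (p - s) \<le> sqrt r * norm (s - z)" by (simp add: real_sqrt_mult)
    thus ?thesis by (simp add: p_def s_def z_def norm_minus_commute)
  qed
  have ind: "norm (x k - xstar) \<le> r powr (real k / 2) * norm (x 0 - xstar)" for k
  proof (induction k)
    case 0 thus ?case using r0 by simp
  next
    case (Suc k)
    have "norm (x (Suc k) - xstar) \<le> sqrt r * norm (x k - xstar)" by (rule onestep)
    also have "\<dots> \<le> sqrt r * (r powr (real k / 2) * norm (x 0 - xstar))"
      using Suc r0 by (intro mult_left_mono) auto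
    also have "\<dots> = r powr (real (Suc k) / 2) * norm (x 0 - xstar)"
    proof (cases "r = 0")
      case True thus ?thesis by simp
    next
      case False
      have "sqrt r = r powr (1/2)" using r0 by (simp add: powr_half_sqrt)
      moreover have "r powr (1/2) * r powr (real k / 2) = r powr (real (Suc k) / 2)"
        using False r0 by (simp add: powr_add[symmetric] add_divide_distrib)
      ultimately show ?thesis by simp
    qed
    finally show ?case .
  qed
  show ?thesis
  proof
    fix k
    show "norm (x (Suc k) - xstar) \<le> ((\<theta> + q) / (\<alpha> + \<theta>)) powr ((real k + 1) / 2) * norm (x 0 - xstar)"
      using ind[of "Suc k"] by (simp add: r_def add.commute)
  qed
qed

end
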